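(* Let $R$ be a finite local commutative ring, $K\le R^\times$, $\mathcal C=\mathrm{Cyc}(K,R)$ and $\mathcal A=\mathcal A(K,R)$ its multiplication S-ring; let $u=0$, $v=1$. If the S-ring $\mathcal A$ is trivial, then the scheme $\mathcal C_{u,v}$ is trivial. In particular, in this case $\mathrm{Aut}(\mathcal C)=\Gamma(K,R)$.
   Context: All rings have an identity. A scheme on a finite set $V$ is a pair $(V,\mathcal R)$, $\mathcal R$ a partition of $V\times V$ into nonempty basis relations, closed under transposition, with the diagonal a union of basis relations and with the intersection numbers $|\{y:(x,y)\in R_1,(y,z)\in R_2\}|$ depending only on the basis relation containing $(x,z)$; relations are unions of basis relations. A scheme is trivial if every subset of $V\times V$ is a relation (all basis relations are singletons). $\mathrm{Aut}$ is the group of permutations fixing every basis relation; $\mathrm{Iso}$ the group of permutations permuting them. $[\mathcal C,\mathcal M]$ is the smallest scheme having all relations of $\mathcal C$ and of the set $\mathcal M$ as relations; $\mathcal C_w=[\mathcal C,\{(w,w)\}]$, $\mathcal C_{u,v}=[\mathcal C,\{(u,u)\},\{(v,v)\}]$. If $\Delta(U)$ is a relation, $\mathcal C_U$ is the scheme on $U$ with basis relations the nonempty $S\cap U^2$. For $\Gamma\le\mathrm{Iso}(\mathcal C)$, $\mathcal C^\Gamma$ is the scheme whose relations are the $\Gamma$-invariant relations of $\mathcal C$. $\mathrm{Cyc}(K,R)$ is the scheme on $R$ with basis relations $\{(x,y): y-x\in rK\}$, $r\in R$. With $u=0$, $\mathcal C'=((\mathcal C_u)_{R^\times})^{R^\times_{right}}$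 where $R^\times_{right}=\{x\mapsto xa:a\in R^\times\}$; its basis relations are $\{(g,xg):g\in R^\times,x\in X\}$ for sets $X$ partitioning $R^\times$. The multiplication S-ring $\mathcal A(K,R)$ is the S-ring over $R^\times$ with these basic sets $X$; it is trivial if all basic sets are singletons. $\Gamma(K,R)$ is the group of permutations $x\mapsto ax+b$, $a\in K$, $b\in R$. *)

theory Defs
  imports Main
begin

definition is_ideal :: "'a::comm_ring_1 set \<Rightarrow> bool" where
  "is_ideal I \<longleftrightarrow> 0 \<in> I \<and> (\<forall>x\<in>I. \<forall>y\<in>I. x + y \<in> I) \<and> (\<forall>x\<in>I. \<forall>r. r * x \<in> I)"

definition maximal_ideal :: "'a::comm_ring_1 set \<Rightarrow> bool" where
  "maximal_ideal I \<longleftrightarrow> is_ideal I \<and> 1 \<notin> I \<and>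
     (\<forall>J. is_ideal J \<and> 1 \<notin> J \<and> I \<subseteq> J \<longrightarrow> J = I)"

definition local_ring :: "'a::comm_ring_1 itself \<Rightarrow> bool" where
  "local_ring _ \<longleftrightarrow> (\<exists>!I::'a set. maximal_ideal I)"

definition ring_units :: "'a::comm_ring_1 set" where
  "ring_units = {x. x dvd 1}"

definition unit_subgroup :: "'a::comm_ring_1 set \<Rightarrow> bool" where
  "unit_subgroup K \<longleftrightarrow> K \<subseteq> ring_units \<and> 1 \<in> K \<and> (\<forall>x\<in>K. \<forall>y\<in>K. x * y \<in> K)
     \<and> (\<forall>x\<in>K. \<exists>y\<in>K. x * y = 1)"

text \<open>A scheme on V is given by its set of basis relations.\<close>
definition is_scheme :: "'a set \<Rightarrow> ('a \<times> 'a) set set \<Rightarrow> bool" where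
  "is_scheme V S \<longleftrightarrow> finite V \<and>
     (\<forall>B\<in>S. B \<noteq> {} \<and> B \<subseteq> V \<times> V) \<and> \<Union>S = V \<times> V \<and>
     (\<forall>B1\<in>S. \<forall>B2\<in>S. B1 \<noteq> B2 \<longrightarrow> B1 \<inter> B2 = {}) \<and>
     (\<forall>B\<in>S. converse B \<in> S) \<and>
     (\<exists>T\<subseteq>S. \<Union>T = Id_on V) \<and>
     (\<forall>B1\<in>S. \<forall>B2\<in>S. \<forall>B\<in>S. \<forall>x z x' z'. (x, z) \<in> B \<longrightarrow> (x', z') \<in> B \<longrightarrow>
        card {y\<in>V. (x, y) \<in> B1 \<and> (y, z) \<in> B2} = card {y\<in>V. (x', y) \<in> B1 \<and> (y, z') \<in> B2})"

definition is_rel :: "('a \<times> 'a) set set \<Rightarrow> ('a \<times> 'a) set \<Rightarrow> bool" where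
  "is_rel S X \<longleftrightarrow> (\<exists>T\<subseteq>S. X = \<Union>T)"

definition trivial_scheme :: "('a \<times> 'a) set set \<Rightarrow> bool" where
  "trivial_scheme S \<longleftrightarrow> (\<forall>B\<in>S. \<exists>p. B = {p})"

definition is_coherent_closure ::
    "'a set \<Rightarrow> ('a \<times> 'a) set set \<Rightarrow> ('a \<times> 'a) set set \<Rightarrow> ('a \<times> 'a) set set \<Rightarrow> bool" where
  "is_coherent_closure V C M S \<longleftrightarrow>
     is_scheme V S \<and> (\<forall>X. is_rel C X \<longrightarrow> is_rel S X) \<and> (\<forall>X\<in>M. is_rel S X) \<and>
     (\<forall>S'. is_scheme V S' \<and> (\<forall>X. is_rel C X \<longrightarrow> is_rel S' X) \<and> (\<forall>X\<in>M. is_rel S' X)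
        \<longrightarrow> (\<forall>X. is_rel S X \<longrightarrow> is_rel S' X))"

definition coherent_closure ::
    "'a set \<Rightarrow> ('a \<times> 'a) set set \<Rightarrow> ('a \<times> 'a) set set \<Rightarrow> ('a \<times> 'a) set set" where
  "coherent_closure V C M = (THE S. is_coherent_closure V C M S)"

definition restrict_scheme :: "('a \<times> 'a) set set \<Rightarrow> 'a set \<Rightarrow> ('a \<times> 'a) set set" where
  "restrict_scheme S U = {B \<inter> (U \<times> U) | B. B \<in> S \<and> B \<inter> (U \<times> U) \<noteq> {}}"

definition pair_image :: "('a \<Rightarrow> 'a) \<Rightarrow> ('a \<times> 'a) set \<Rightarrow> ('a \<times> 'a) set" where
  "pair_image f X = (\<lambda>(x, y). (f x, f y)) ` X"

text \<open>C^G: scheme whose relations are the G-invariant relations of C; its basis relations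
  are the minimal nonempty G-invariant relations of C.\<close>
definition invariant_scheme :: "('a \<times> 'a) set set \<Rightarrow> ('a \<Rightarrow> 'a) set \<Rightarrow> ('a \<times> 'a) set set" where
  "invariant_scheme S G = {X. is_rel S X \<and> X \<noteq> {} \<and> (\<forall>g\<in>G. pair_image g X = X) \<and>
      (\<forall>Y. is_rel S Y \<and> Y \<noteq> {} \<and> Y \<subseteq> X \<and> (\<forall>g\<in>G. pair_image g Y = Y) \<longrightarrow> Y = X)}"

definition Aut :: "'a set \<Rightarrow> ('a \<times> 'a) set set \<Rightarrow> ('a \<Rightarrow> 'a) set" where
  "Aut V S = {f. bij_betw f V V \<and> (\<forall>B\<in>S. pair_image f B = B)}"

definition Cyc :: "'a::comm_ring_1 set \<Rightarrow> ('a \<times> 'a) set set" where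
  "Cyc K = {{(x, y). y - x \<in> (\<lambda>k. r * k) ` K} | r. True}"

definition right_mult_group :: "('a::comm_ring_1 \<Rightarrow> 'a) set" where
  "right_mult_group = {(\<lambda>x. x * a) | a. a \<in> ring_units}"

text \<open>C' = ((C_u)_{R^x})^{R^x_right} with u = 0.\<close>
definition Cyc_prime :: "'a::{comm_ring_1,finite} set \<Rightarrow> ('a \<times> 'a) set set" where
  "Cyc_prime K = invariant_scheme
      (restrict_scheme (coherent_closure UNIV (Cyc K) {{(0, 0)}}) ring_units) right_mult_group"

text \<open>Basic sets X of A(K,R): the basis relation {(g, xg)} of C' corresponds to X = {x. (1,x) \<in> B}.\<close>
definition mult_sring_basic_sets :: "'a::{comm_ring_1,finite} set \<Rightarrow> 'a set set" where
  "mult_sring_basic_sets K = {{x. (1, x) \<in> B} | B. B \<in> Cyc_prime K}"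

definition mult_sring_trivial :: "'a::{comm_ring_1,finite} set \<Rightarrow> bool" where
  "mult_sring_trivial K \<longleftrightarrow> (\<forall>X\<in>mult_sring_basic_sets K. \<exists>x. X = {x})"

definition Gamma_affine :: "'a::comm_ring_1 set \<Rightarrow> ('a \<Rightarrow> 'a) set" where
  "Gamma_affine K = {(\<lambda>x. a * x + b) | a b. a \<in> K}"

end

theory Submission
  imports Defs
begin


definition cnt :: "('a \<times> 'a) set \<Rightarrow> ('a \<times> 'a) set \<Rightarrow> 'a \<times> 'a \<Rightarrow> nat" where
  "cnt X Y p = card {y. (fst p, y) \<in> X \<and> (y, snd p) \<in> Y}"

definition bas :: "('a \<times> 'a) set set \<Rightarrow> 'a \<times> 'a \<Rightarrow> ('a \<times> 'a) set" where
  "bas S p = (THE B. B \<in> S \<and> p \<in> B)"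

lemma schD_fin: "is_scheme V S \<Longrightarrow> finite V"
  unfolding is_scheme_def by (elim conjE) assumption
lemma schD_ne: "is_scheme V S \<Longrightarrow> \<forall>B\<in>S. B \<noteq> {} \<and> B \<subseteq> V \<times> V"
  unfolding is_scheme_def by (elim conjE) assumption
lemma schD_cov: "is_scheme V S \<Longrightarrow> \<Union>S = V \<times> V"
  unfolding is_scheme_def by (elim conjE) assumption
lemma schD_dj: "is_scheme V S \<Longrightarrow> \<forall>B1\<in>S. \<forall>B2\<in>S. B1 \<noteq> B2 \<longrightarrow> B1 \<inter> B2 = {}"
  unfolding is_scheme_def by (elim conjE) assumption
lemma schD_conv: "is_scheme V S \<Longrightarrow> \<forall>B\<in>S. converse B \<in> S"
  unfolding is_scheme_def by (elim conjE) assumption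
lemma schD_id: "is_scheme V S \<Longrightarrow> \<exists>T\<subseteq>S. \<Union>T = Id_on V"
  unfolding is_scheme_def by (elim conjE) assumption
lemma schD_cnt: "is_scheme V S \<Longrightarrow> \<forall>B1\<in>S. \<forall>B2\<in>S. \<forall>B\<in>S. \<forall>x z x' z'. (x, z) \<in> B \<longrightarrow> (x', z') \<in> B \<longrightarrow>
        card {y\<in>V. (x, y) \<in> B1 \<and> (y, z) \<in> B2} = card {y\<in>V. (x', y) \<in> B1 \<and> (y, z') \<in> B2}"
  unfolding is_scheme_def by (elim conjE) assumption
lemma schI: "finite V \<Longrightarrow> \<forall>B\<in>S. B \<noteq> {} \<and> B \<subseteq> V \<times> V \<Longrightarrow> \<Union>S = V \<times> V \<Longrightarrow>
   \<forall>B1\<in>S. \<forall>B2\<in>S. B1 \<noteq> B2 \<longrightarrow> B1 \<inter> B2 = {} \<Longrightarrow> \<forall>B\<in>S. converse B \<in> S \<Longrightarrow>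
   \<exists>T\<subseteq>S. \<Union>T = Id_on V \<Longrightarrow>
   \<forall>B1\<in>S. \<forall>B2\<in>S. \<forall>B\<in>S. \<forall>x z x' z'. (x, z) \<in> B \<longrightarrow> (x', z') \<in> B \<longrightarrow>
        card {y\<in>V. (x, y) \<in> B1 \<and> (y, z) \<in> B2} = card {y\<in>V. (x', y) \<in> B1 \<and> (y, z') \<in> B2}
   \<Longrightarrow> is_scheme V S"
  unfolding is_scheme_def by (intro conjI)

lemma sch_disj: assumes "is_scheme UNIV S" "B1 \<in> S" "B2 \<in> S" "p \<in> B1" "p \<in> B2" shows "B1 = B2"
  using schD_dj[OF assms(1)] assms(2-5) by blast

lemma sch_bas: assumes "is_scheme UNIV S" shows "bas S p \<in> S \<and> p \<in> bas S p"
proof -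
  from schD_cov[OF assms] have "p \<in> \<Union>S" by simp
  then obtain B where B: "B \<in> S" "p \<in> B" by auto
  have "bas S p = B" unfolding bas_def
    by (rule the_equality) (use B sch_disj[OF assms] in blast)+
  with B show ?thesis by simp
qed

lemma sch_bas_eq: "is_scheme UNIV S \<Longrightarrow> B \<in> S \<Longrightarrow> p \<in> B \<Longrightarrow> bas S p = B"
  using sch_bas sch_disj by metis

lemma rel_iff: assumes "is_scheme UNIV S"
  shows "is_rel S X \<longleftrightarrow> (\<forall>p\<in>X. bas S p \<subseteq> X)"
proof
  assume "is_rel S X"
  then obtain T where T: "T \<subseteq> S" "X = \<Union>T" unfolding is_rel_def by auto
  show "\<forall>p\<in>X. bas S p \<subseteq> X"
  proof
    fix p assume "p \<in> X"
    then obtain B where "B \<in> T" "p \<in> B" using T by auto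
    then have "bas S p = B" using sch_bas_eq[OF assms] T by blast
    then show "bas S p \<subseteq> X" using \<open>B \<in> T\<close> T by auto
  qed
next
  assume H: "\<forall>p\<in>X. bas S p \<subseteq> X"
  have "X = \<Union>(bas S ` X)" using H sch_bas[OF assms] by blast
  moreover have "bas S ` X \<subseteq> S" using sch_bas[OF assms] by auto
  ultimately show "is_rel S X" unfolding is_rel_def by blast
qed

lemma bas_bas: "is_scheme UNIV S \<Longrightarrow> q \<in> bas S p \<Longrightarrow> bas S q = bas S p"
  using sch_bas sch_bas_eq by metis

lemma sch_cnt: assumes "is_scheme UNIV S" "B1 \<in> S" "B2 \<in> S" "B \<in> S" "p \<in> B" "q \<in> B"
  shows "cnt B1 B2 p = cnt B1 B2 q"
proof -
  obtain x z x' z' where pq: "p = (x,z)" "q = (x',z')" by force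
  have "card {y\<in>UNIV. (x, y) \<in> B1 \<and> (y, z) \<in> B2} = card {y\<in>UNIV. (x', y) \<in> B1 \<and> (y, z') \<in> B2}"
    using schD_cnt[OF assms(1)] assms(2-6) pq by blast
  then show ?thesis unfolding cnt_def pq by simp
qed

lemma cnt_split1:
  fixes S :: "('a::finite \<times> 'a) set set"
  assumes "is_scheme UNIV S" "T \<subseteq> S"
  shows "cnt (\<Union>T) Y p = (\<Sum>B\<in>T. cnt B Y p)"
proof -
  have fin: "finite T" by simp
  have "{y. (fst p, y) \<in> \<Union>T \<and> (y, snd p) \<in> Y} = (\<Union>B\<in>T. {y. (fst p, y) \<in> B \<and> (y, snd p) \<in> Y})"
    by auto
  moreover have "card (\<Union>B\<in>T. {y. (fst p, y) \<in> B \<and> (y, snd p) \<in> Y}) = (\<Sum>B\<in>T. card {y. (fst p, y) \<in> B \<and> (y, snd p) \<in> Y})"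
    apply (rule card_UN_disjoint[OF fin])
     apply simp
    using assms(2) by (auto dest: sch_disj[OF assms(1)])
  ultimately show ?thesis unfolding cnt_def by simp
qed

lemma cnt_split2:
  fixes S :: "('a::finite \<times> 'a) set set"
  assumes "is_scheme UNIV S" "T \<subseteq> S"
  shows "cnt X (\<Union>T) p = (\<Sum>B\<in>T. cnt X B p)"
proof -
  have fin: "finite T" by simp
  have "{y. (fst p, y) \<in> X \<and> (y, snd p) \<in> \<Union>T} = (\<Union>B\<in>T. {y. (fst p, y) \<in> X \<and> (y, snd p) \<in> B})"
    by auto
  moreover have "card (\<Union>B\<in>T. {y. (fst p, y) \<in> X \<and> (y, snd p) \<in> B}) = (\<Sum>B\<in>T. card {y. (fst p, y) \<in> X \<and> (y, snd p) \<in> B})"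
    apply (rule card_UN_disjoint[OF fin])
     apply simp
    using assms(2) by (auto dest: sch_disj[OF assms(1)])
  ultimately show ?thesis unfolding cnt_def by simp
qed

lemma rel_cnt:
  fixes S :: "('a::finite \<times> 'a) set set"
  assumes S: "is_scheme UNIV S" and X: "is_rel S X" and Y: "is_rel S Y" and q: "q \<in> bas S p"
  shows "cnt X Y q = cnt X Y p"
proof -
  obtain T1 where T1: "T1 \<subseteq> S" "X = \<Union>T1" using X unfolding is_rel_def by auto
  obtain T2 where T2: "T2 \<subseteq> S" "Y = \<Union>T2" using Y unfolding is_rel_def by auto
  have e: "cnt X Y r = (\<Sum>B1\<in>T1. \<Sum>B2\<in>T2. cnt B1 B2 r)" for r
  proof -
    have "cnt X Y r = (\<Sum>B1\<in>T1. cnt B1 Y r)" using cnt_split1[OF S T1(1)] T1(2) by simp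
    also have "\<dots> = (\<Sum>B1\<in>T1. \<Sum>B2\<in>T2. cnt B1 B2 r)" using cnt_split2[OF S T2(1)] T2(2) by simp
    finally show ?thesis .
  qed
  have bp: "bas S p \<in> S" "p \<in> bas S p" using sch_bas[OF S] by auto
  have "cnt B1 B2 q = cnt B1 B2 p" if "B1 \<in> T1" "B2 \<in> T2" for B1 B2
  proof -
    have "B1 \<in> S" "B2 \<in> S" using that T1(1) T2(1) by auto
    then show ?thesis using sch_cnt[OF S _ _ bp(1) q bp(2)] by blast
  qed
  then show ?thesis unfolding e by simp
qed

definition coh_alg :: "('a \<times> 'a) set set \<Rightarrow> bool" where
  "coh_alg W \<longleftrightarrow> UNIV \<in> W \<and> Id \<in> W \<and> (\<forall>X\<in>W. - X \<in> W) \<and> (\<forall>X\<in>W. \<forall>Y\<in>W. X \<inter> Y \<in> W)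
     \<and> (\<forall>X\<in>W. converse X \<in> W) \<and> (\<forall>X\<in>W. \<forall>Y\<in>W. \<forall>c. {p. cnt X Y p = c} \<in> W)"

lemma sch_Id: assumes "is_scheme UNIV S" shows "is_rel S Id"
proof -
  have e: "Id_on UNIV = Id" by auto
  show ?thesis using schD_id[OF assms] unfolding is_rel_def e by metis
qed

lemma bas_conv: assumes S: "is_scheme UNIV S"
  shows "bas S (prod.swap p) = converse (bas S p)"
proof -
  have "converse (bas S p) \<in> S" using schD_conv[OF S] sch_bas[OF S] by blast
  moreover have "prod.swap p \<in> converse (bas S p)" using sch_bas[OF S, of p] by (cases p) auto
  ultimately show ?thesis by (rule sch_bas_eq[OF S])
qed

lemma rel_UNIV: assumes S: "is_scheme UNIV S" shows "is_rel S UNIV"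
  using rel_iff[OF S] by auto

lemma rel_compl: assumes S: "is_scheme UNIV S" and X: "is_rel S X" shows "is_rel S (- X)"
  unfolding rel_iff[OF S]
proof (intro ballI subsetI)
  fix p q assume pq: "p \<in> - X" "q \<in> bas S p"
  show "q \<in> - X"
  proof
    assume "q \<in> X"
    then have "bas S q \<subseteq> X" using X rel_iff[OF S] by blast
    moreover have "bas S q = bas S p" using bas_bas[OF S pq(2)] .
    ultimately show False using pq(1) sch_bas[OF S, of p] by auto
  qed
qed

lemma rel_conv: assumes S: "is_scheme UNIV S" and X: "is_rel S X" shows "is_rel S (converse X)"
  unfolding rel_iff[OF S]
proof (intro ballI subsetI)
  fix p q assume p: "p \<in> converse X" and q: "q \<in> bas S p"
  have "prod.swap p \<in> X" using p by (cases p) auto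
  then have "bas S (prod.swap p) \<subseteq> X" using X rel_iff[OF S] by blast
  then have "converse (bas S p) \<subseteq> X" unfolding bas_conv[OF S] .
  then show "q \<in> converse X" using q by (cases q) auto
qed

lemma rel_Int: assumes S: "is_scheme UNIV S" and X: "is_rel S X" and Y: "is_rel S Y" shows "is_rel S (X \<inter> Y)"
  unfolding rel_iff[OF S]
proof
  fix p assume "p \<in> X \<inter> Y"
  then have "bas S p \<subseteq> X" "bas S p \<subseteq> Y" using X Y rel_iff[OF S] by blast+
  then show "bas S p \<subseteq> X \<inter> Y" by blast
qed

lemma rel_cntset:
  fixes S :: "('a::finite \<times> 'a) set set"
  assumes S: "is_scheme UNIV S" and X: "is_rel S X" and Y: "is_rel S Y" shows "is_rel S {p. cnt X Y p = c}"
  unfolding rel_iff[OF S]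
proof (intro ballI subsetI)
  fix p q assume "p \<in> {p. cnt X Y p = c}" "q \<in> bas S p"
  then show "q \<in> {p. cnt X Y p = c}" using rel_cnt[OF S X Y] by simp
qed

lemma A2:
  fixes S :: "('a::finite \<times> 'a) set set"
  assumes S: "is_scheme UNIV S" shows "coh_alg {X. is_rel S X}"
  unfolding coh_alg_def mem_Collect_eq
  using rel_UNIV[OF S] sch_Id[OF S] rel_compl[OF S] rel_conv[OF S] rel_Int[OF S] rel_cntset[OF S]
  by simp



lemma cohD:
  assumes "coh_alg W"
  shows cohD_UNIV: "UNIV \<in> W" and cohD_Id: "Id \<in> W"
    and cohD_compl: "X \<in> W \<Longrightarrow> - X \<in> W"
    and cohD_Int: "X \<in> W \<Longrightarrow> Y \<in> W \<Longrightarrow> X \<inter> Y \<in> W"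
    and cohD_conv: "X \<in> W \<Longrightarrow> converse X \<in> W"
    and cohD_cnt: "X \<in> W \<Longrightarrow> Y \<in> W \<Longrightarrow> {p. cnt X Y p = c} \<in> W"
  using assms unfolding coh_alg_def by simp_all

lemma cohI:
  assumes "UNIV \<in> W" "Id \<in> W" "\<And>X. X \<in> W \<Longrightarrow> - X \<in> W"
    "\<And>X Y. X \<in> W \<Longrightarrow> Y \<in> W \<Longrightarrow> X \<inter> Y \<in> W"
    "\<And>X. X \<in> W \<Longrightarrow> converse X \<in> W"
    "\<And>X Y c. X \<in> W \<Longrightarrow> Y \<in> W \<Longrightarrow> {p. cnt X Y p = c} \<in> W"
  shows "coh_alg W"
  unfolding coh_alg_def using assms by simp

lemma coh_Inter: assumes W: "coh_alg W" and F: "finite F" "F \<subseteq> W" shows "\<Inter>F \<in> W"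
  using F
proof (induction F rule: finite_induct)
  case empty then show ?case using cohD_UNIV[OF W] by simp
next
  case (insert A F) then show ?case using cohD_Int[OF W] by simp
qed

lemma coh_Un2: assumes W: "coh_alg W" "X \<in> W" "Y \<in> W" shows "X \<union> Y \<in> W"
proof -
  have "X \<union> Y = - (- X \<inter> - Y)" by auto
  then show ?thesis using cohD_compl[OF W(1)] cohD_Int[OF W(1)] W(2,3) by metis
qed

lemma coh_Union: assumes W: "coh_alg W" and F: "finite F" "F \<subseteq> W" shows "\<Union>F \<in> W"
  using F
proof (induction F rule: finite_induct)
  case empty
  have "{} = - (UNIV :: ('a \<times> 'a) set)" by simp
  then show ?case using cohD_compl[OF W cohD_UNIV[OF W]] by simp
next
  case (insert A F) then show ?case using coh_Un2[OF W] by simp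
qed

definition atom :: "('a \<times> 'a) set set \<Rightarrow> 'a \<times> 'a \<Rightarrow> ('a \<times> 'a) set" where
  "atom W p = \<Inter>{X\<in>W. p \<in> X}"

context
  fixes W :: "('a::finite \<times> 'a) set set"
  assumes W: "coh_alg W"
begin

lemma atom_in: "atom W p \<in> W"
  unfolding atom_def by (rule coh_Inter[OF W]) auto

lemma atom_mem: "p \<in> atom W p"
  unfolding atom_def by auto

lemma atom_sub: "X \<in> W \<Longrightarrow> p \<in> X \<Longrightarrow> atom W p \<subseteq> X"
  unfolding atom_def by auto

lemma atom_eq: assumes "q \<in> atom W p" shows "atom W q = atom W p"
proof
  show "atom W q \<subseteq> atom W p" using atom_sub[OF atom_in assms] .
  show "atom W p \<subseteq> atom W q"
  proof (rule ccontr)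
    assume "\<not> atom W p \<subseteq> atom W q"
    then have "p \<notin> atom W q"
      using atom_sub[OF atom_in, of p q] by blast
    then have "p \<in> atom W p \<inter> - atom W q" using atom_mem by auto
    moreover have "atom W p \<inter> - atom W q \<in> W" using cohD_Int[OF W atom_in cohD_compl[OF W atom_in]] .
    ultimately have "atom W p \<subseteq> atom W p \<inter> - atom W q" using atom_sub by blast
    then show False using assms atom_mem[of q] by blast
  qed
qed

lemma A1: "\<exists>S. is_scheme UNIV S \<and> (\<forall>X. is_rel S X \<longleftrightarrow> X \<in> W)"
proof -
  define S where "S = range (atom W)"
  have relS: "is_rel S X \<longleftrightarrow> X \<in> W" for X
  proof
    assume "is_rel S X"
    then obtain T where T: "T \<subseteq> S" "X = \<Union>T" unfolding is_rel_def by auto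
    have "finite T" by simp
    moreover have "T \<subseteq> W" using T(1) atom_in unfolding S_def by blast
    ultimately show "X \<in> W" using coh_Union[OF W] T(2) by simp
  next
    assume X: "X \<in> W"
    have e: "X = \<Union>(atom W ` X)"
    proof
      show "X \<subseteq> \<Union>(atom W ` X)" using atom_mem by blast
      show "\<Union>(atom W ` X) \<subseteq> X" using atom_sub[OF X] by blast
    qed
    show "is_rel S X" unfolding is_rel_def S_def
      by (rule exI[of _ "atom W ` X"]) (use e in auto)
  qed
  have "is_scheme UNIV S"
  proof (rule schI; (intro conjI ballI allI impI)?)
    show "finite (UNIV :: 'a set)" by simp
    fix B assume "B \<in> S" then show "B \<noteq> {}" "B \<subseteq> UNIV \<times> UNIV" using atom_mem unfolding S_def by auto
  next
    show "\<Union>S = UNIV \<times> UNIV" using atom_mem unfolding S_def by auto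
  next
    fix B1 B2 assume B: "B1 \<in> S" "B2 \<in> S" "B1 \<noteq> B2"
    show "B1 \<inter> B2 = {}"
    proof (rule ccontr)
      assume "B1 \<inter> B2 \<noteq> {}"
      then obtain r where r: "r \<in> B1" "r \<in> B2" by blast
      obtain p q where pq: "B1 = atom W p" "B2 = atom W q" using B unfolding S_def by auto
      have "atom W r = atom W p" using atom_eq[of r p] r(1) pq(1) by simp
      moreover have "atom W r = atom W q" using atom_eq[of r q] r(2) pq(2) by simp
      ultimately have "B1 = B2" using pq by simp
      then show False using B(3) by simp
    qed
  next
    fix B assume "B \<in> S"
    then obtain p where p: "B = atom W p" unfolding S_def by auto
    have c1: "converse B \<in> W" using cohD_conv[OF W atom_in] p by simp
    have "prod.swap p \<in> converse B" using p atom_mem by (cases p) auto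
    then have s1: "atom W (prod.swap p) \<subseteq> converse B" by (rule atom_sub[OF c1])
    have c2: "converse (atom W (prod.swap p)) \<in> W" using cohD_conv[OF W atom_in] .
    have "p \<in> converse (atom W (prod.swap p))" using atom_mem[of "prod.swap p"] by (cases p) auto
    then have "B \<subseteq> converse (atom W (prod.swap p))" using atom_sub[OF c2] p by simp
    then have "converse B = atom W (prod.swap p)" using s1 by auto
    then show "converse B \<in> S" unfolding S_def by simp
  next
    have "is_rel S Id" using relS cohD_Id[OF W] by simp
    then obtain T where T: "T \<subseteq> S" "Id = \<Union>T" unfolding is_rel_def by auto
    then show "\<exists>T\<subseteq>S. \<Union>T = Id_on UNIV" by (intro exI[of _ T]) auto
  next
    fix B1 B2 B x z x' z'
    assume B1: "B1 \<in> S" and B2: "B2 \<in> S" and B: "B \<in> S" and xz: "(x, z) \<in> B" and xz': "(x', z') \<in> B"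
    have "B1 \<in> W" "B2 \<in> W" using B1 B2 atom_in unfolding S_def by auto
    then have L: "{p. cnt B1 B2 p = cnt B1 B2 (x,z)} \<in> W" by (rule cohD_cnt[OF W])
    obtain r where r: "B = atom W r" using B unfolding S_def by auto
    then have "B = atom W (x,z)" using atom_eq[of "(x,z)" r] xz by simp
    then have "B \<subseteq> {p. cnt B1 B2 p = cnt B1 B2 (x,z)}" using atom_sub[OF L] by simp
    then have "cnt B1 B2 (x',z') = cnt B1 B2 (x,z)" using xz' by auto
    then show "card {y \<in> UNIV. (x, y) \<in> B1 \<and> (y, z) \<in> B2} = card {y \<in> UNIV. (x', y) \<in> B1 \<and> (y, z') \<in> B2}"
      unfolding cnt_def by simp
  qed
  with relS show ?thesis by blast
qed

end

definition adm :: "('a \<times> 'a) set set \<Rightarrow> ('a \<times> 'a) set set \<Rightarrow> ('a \<times> 'a) set set \<Rightarrow> bool" where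
  "adm C M S \<longleftrightarrow> is_scheme UNIV S \<and> (\<forall>X. is_rel C X \<longrightarrow> is_rel S X) \<and> (\<forall>X\<in>M. is_rel S X)"

lemma admD: assumes "adm C M S"
  shows admD_sch: "is_scheme UNIV S" and admD_C: "is_rel C X \<Longrightarrow> is_rel S X" and admD_M: "X \<in> M \<Longrightarrow> is_rel S X"
  using assms unfolding adm_def by simp_all

lemma cc_eq: "is_coherent_closure UNIV C M S \<longleftrightarrow>
   adm C M S \<and> (\<forall>S'. adm C M S' \<longrightarrow> (\<forall>X. is_rel S X \<longrightarrow> is_rel S' X))"
  unfolding is_coherent_closure_def adm_def by (simp only: conj_assoc)

lemma ccD_adm: "is_coherent_closure UNIV C M S \<Longrightarrow> adm C M S"
  unfolding cc_eq by (elim conjE)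

lemma ccD_min: "is_coherent_closure UNIV C M S \<Longrightarrow> adm C M S' \<Longrightarrow> is_rel S X \<Longrightarrow> is_rel S' X"
  unfolding cc_eq by blast

lemma ccI: assumes "adm C M S" "\<And>S' X. adm C M S' \<Longrightarrow> is_rel S X \<Longrightarrow> is_rel S' X"
  shows "is_coherent_closure UNIV C M S"
  unfolding cc_eq using assms by blast

lemma closure_exists:
  fixes C :: "('a::finite \<times> 'a) set set"
  shows "\<exists>S. is_coherent_closure UNIV C M S"
proof -
  define W where "W = {X. \<forall>S'. adm C M S' \<longrightarrow> is_rel S' X}"
  have "coh_alg W"
  proof (rule cohI)
    show "UNIV \<in> W" unfolding W_def using rel_UNIV admD_sch by blast
    show "Id \<in> W" unfolding W_def using sch_Id admD_sch by blast
    show "- X \<in> W" if "X \<in> W" for X using that unfolding W_def using rel_compl admD_sch by blast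
    show "X \<inter> Y \<in> W" if "X \<in> W" "Y \<in> W" for X Y using that unfolding W_def using rel_Int admD_sch by blast
    show "converse X \<in> W" if "X \<in> W" for X using that unfolding W_def using rel_conv admD_sch by blast
    show "{p. cnt X Y p = c} \<in> W" if "X \<in> W" "Y \<in> W" for X Y c
      using that unfolding W_def using rel_cntset admD_sch by blast
  qed
  then obtain S where S: "is_scheme UNIV S" "\<And>X. is_rel S X \<longleftrightarrow> X \<in> W" using A1 by blast
  have "is_coherent_closure UNIV C M S"
  proof (rule ccI)
    show "adm C M S" unfolding adm_def using S unfolding W_def by (auto dest: admD_C admD_M)
    show "is_rel S' X" if "adm C M S'" "is_rel S X" for S' X using that S unfolding W_def by blast
  qed
  then show ?thesis by blast
qed

lemma same_rels_eq:
  fixes S1 :: "('a::finite \<times> 'a) set set"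
  assumes S1: "is_scheme UNIV S1" and S2: "is_scheme UNIV S2" and R: "\<And>X. is_rel S1 X \<longleftrightarrow> is_rel S2 X"
  shows "S1 \<subseteq> S2"
proof
  fix B assume B: "B \<in> S1"
  then obtain p where p: "p \<in> B" using schD_ne[OF S1] by blast
  have "is_rel S1 B" using B unfolding is_rel_def by blast
  then have "is_rel S2 B" using R by simp
  then have sub: "bas S2 p \<subseteq> B" using rel_iff[OF S2] p by blast
  have "is_rel S2 (bas S2 p)" using sch_bas[OF S2] unfolding is_rel_def by blast
  then have "is_rel S1 (bas S2 p)" using R by simp
  then have "bas S1 p \<subseteq> bas S2 p" using rel_iff[OF S1] sch_bas[OF S2] by blast
  moreover have "bas S1 p = B" using sch_bas_eq[OF S1 B p] .
  ultimately show "B \<in> S2" using sub sch_bas[OF S2, of p] by auto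
qed

lemma closure_is:
  fixes C :: "('a::finite \<times> 'a) set set"
  shows "is_coherent_closure UNIV C M (coherent_closure UNIV C M)"
proof -
  obtain S where S: "is_coherent_closure UNIV C M S" using closure_exists by blast
  have u: "S' = S" if S': "is_coherent_closure UNIV C M S'" for S'
  proof -
    have a: "is_scheme UNIV S" "is_scheme UNIV S'"
      using admD_sch[OF ccD_adm[OF S]] admD_sch[OF ccD_adm[OF S']] by auto
    have "is_rel S X \<longleftrightarrow> is_rel S' X" for X
      using ccD_min[OF S ccD_adm[OF S']] ccD_min[OF S' ccD_adm[OF S]] by blast
    then show ?thesis using same_rels_eq[OF a(1) a(2)] same_rels_eq[OF a(2) a(1)] by blast
  qed
  show ?thesis unfolding coherent_closure_def by (rule theI[where P = "is_coherent_closure UNIV C M", OF S u])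
qed

lemma closure_adm:
  fixes C :: "('a::finite \<times> 'a) set set"
  shows "adm C M (coherent_closure UNIV C M)"
  using ccD_adm[OF closure_is] .

lemma closure_min:
  fixes C :: "('a::finite \<times> 'a) set set"
  shows "adm C M S \<Longrightarrow> is_rel (coherent_closure UNIV C M) X \<Longrightarrow> is_rel S X"
  using ccD_min[OF closure_is] .



lemma cnt_pair: "cnt X Y (x, z) = card {y. (x, y) \<in> X \<and> (y, z) \<in> Y}"
  by (simp add: cnt_def)

lemma pair_image_eq: "pair_image f X = map_prod f f ` X"
  unfolding pair_image_def by (simp add: map_prod_def)

lemma pair_image_inv: "(\<And>x. g (f x) = x) \<Longrightarrow> pair_image g (pair_image f X) = X"
  unfolding pair_image_eq image_image by (simp add: map_prod.comp comp_def map_prod_def case_prod_beta)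

lemma pair_image_single: "pair_image f {(x,y)} = {(f x, f y)}"
  unfolding pair_image_def by simp

lemma inv_iff: assumes "bij h"
  shows "pair_image h X = X \<longleftrightarrow> (\<forall>x y. (h x, h y) \<in> X \<longleftrightarrow> (x, y) \<in> X)"
proof
  assume e: "pair_image h X = X"
  show "\<forall>x y. (h x, h y) \<in> X \<longleftrightarrow> (x, y) \<in> X"
  proof (intro allI iffI)
    fix x y assume "(h x, h y) \<in> X"
    then have "(h x, h y) \<in> pair_image h X" using e by simp
    then obtain a b where "(a,b) \<in> X" "h a = h x" "h b = h y" unfolding pair_image_def by auto
    then show "(x,y) \<in> X" using bij_is_inj[OF assms] by (metis injD)
  next
    fix x y assume "(x, y) \<in> X"
    then have "(h x, h y) \<in> pair_image h X" unfolding pair_image_def by force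
    then show "(h x, h y) \<in> X" using e by simp
  qed
next
  assume H: "\<forall>x y. (h x, h y) \<in> X \<longleftrightarrow> (x, y) \<in> X"
  show "pair_image h X = X"
  proof
    show "pair_image h X \<subseteq> X" using H unfolding pair_image_def by auto
    show "X \<subseteq> pair_image h X"
    proof
      fix p assume p: "p \<in> X"
      obtain u w where uw: "p = (u,w)" by force
      obtain x where x: "u = h x" using bij_is_surj[OF assms] by (metis surjD)
      obtain y where y: "w = h y" using bij_is_surj[OF assms] by (metis surjD)
      have "(x,y) \<in> X" using H p uw x y by simp
      then show "p \<in> pair_image h X" unfolding pair_image_def uw x y by force
    qed
  qed
qed

lemma transport_scheme:
  fixes S :: "('a::finite \<times> 'a) set set"
  assumes S: "is_scheme UNIV S" and h: "bij h"
  shows "is_scheme UNIV (pair_image h ` S)"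
proof -
  have inj: "inj (map_prod h h)" using bij_is_inj[OF h] unfolding inj_def by auto
  have surj: "surj (map_prod h h)" using bij_is_surj[OF h] by (simp add: map_prod_surj)
  have Ssub: "\<Union>S = UNIV" using schD_cov[OF S] by simp
  show ?thesis
  proof (rule schI; (intro conjI ballI allI impI)?)
    show "finite (UNIV :: 'a set)" by simp
  next
    fix B assume "B \<in> pair_image h ` S"
    then show "B \<noteq> {}" "B \<subseteq> UNIV \<times> UNIV" using schD_ne[OF S] unfolding pair_image_eq by auto
  next
    have "\<Union>(pair_image h ` S) = map_prod h h ` \<Union>S" unfolding pair_image_eq by auto
    then show "\<Union>(pair_image h ` S) = UNIV \<times> UNIV" using Ssub surj by simp
  next
    fix B1 B2 assume "B1 \<in> pair_image h ` S" "B2 \<in> pair_image h ` S" "B1 \<noteq> B2"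
    then obtain A1 A2 where "A1 \<in> S" "A2 \<in> S" "B1 = map_prod h h ` A1" "B2 = map_prod h h ` A2" "A1 \<noteq> A2"
      unfolding pair_image_eq by auto
    moreover have "A1 \<inter> A2 = {}" using schD_dj[OF S] \<open>A1 \<in> S\<close> \<open>A2 \<in> S\<close> \<open>A1 \<noteq> A2\<close> by blast
    ultimately show "B1 \<inter> B2 = {}" using image_Int[OF inj] by (metis image_empty)
  next
    fix B assume "B \<in> pair_image h ` S"
    then obtain A where A: "A \<in> S" "B = map_prod h h ` A" unfolding pair_image_eq by auto
    have "converse B = map_prod h h ` converse A" using A by auto
    moreover have "converse A \<in> S" using schD_conv[OF S] A by blast
    ultimately show "converse B \<in> pair_image h ` S" unfolding pair_image_eq by auto
  next
    obtain T where T0: "T \<subseteq> S" "\<Union>T = Id_on UNIV" using schD_id[OF S] by blast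
    then have T: "T \<subseteq> S" "\<Union>T = Id" by auto
    have "\<Union>(pair_image h ` T) = map_prod h h ` (\<Union>T)" unfolding pair_image_eq by (simp add: image_Union)
    also have "\<dots> = map_prod h h ` Id" using T(2) by simp
    also have "\<dots> = Id"
    proof
      show "map_prod h h ` Id \<subseteq> Id" by auto
      show "Id \<subseteq> map_prod h h ` Id"
      proof
        fix p assume "p \<in> (Id :: ('a \<times> 'a) set)" then obtain y where p: "p = (y,y)" by auto
        obtain x where "y = h x" using bij_is_surj[OF h] by (metis surjD)
        then show "p \<in> map_prod h h ` Id" using p by (auto intro: image_eqI[of _ _ "(x,x)"])
      qed
    qed
    finally show "\<exists>T\<subseteq>pair_image h ` S. \<Union>T = Id_on UNIV" using T by (intro exI[of _ "pair_image h ` T"]) auto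
  next
    fix B1 B2 B x z x' z'
    assume B1: "B1 \<in> pair_image h ` S" and B2: "B2 \<in> pair_image h ` S" and B: "B \<in> pair_image h ` S"
      and xz: "(x, z) \<in> B" and xz': "(x', z') \<in> B"
    obtain A1 A2 A where A: "A1 \<in> S" "A2 \<in> S" "A \<in> S" "B1 = pair_image h A1" "B2 = pair_image h A2" "B = pair_image h A"
      using B1 B2 B by auto
    have ih: "(h a, h b) \<in> pair_image h Z \<longleftrightarrow> (a,b) \<in> Z" for a b Z
      using bij_is_inj[OF h] unfolding pair_image_def by (auto dest: injD)
    have key: "card {y \<in> UNIV. (h a, y) \<in> B1 \<and> (y, h b) \<in> B2} = cnt A1 A2 (a,b)" for a b
    proof -
      have "{y \<in> UNIV. (h a, y) \<in> B1 \<and> (y, h b) \<in> B2} = h ` {y. (a, y) \<in> A1 \<and> (y, b) \<in> A2}"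
      proof (rule set_eqI, rule iffI)
        fix y assume "y \<in> {y \<in> UNIV. (h a, y) \<in> B1 \<and> (y, h b) \<in> B2}"
        moreover obtain y0 where "y = h y0" using bij_is_surj[OF h] by (metis surjD)
        ultimately show "y \<in> h ` {y. (a, y) \<in> A1 \<and> (y, b) \<in> A2}" using ih A by auto
      qed (use ih A in auto)
      then show ?thesis unfolding cnt_def using card_image[OF inj_on_subset[OF bij_is_inj[OF h]]] by simp
    qed
    obtain a b where ab: "x = h a" "z = h b" using bij_is_surj[OF h] by (metis surjD)
    obtain a' b' where ab': "x' = h a'" "z' = h b'" using bij_is_surj[OF h] by (metis surjD)
    have "(a,b) \<in> A" "(a',b') \<in> A" using xz xz' ab ab' ih A by auto
    then have "cnt A1 A2 (a,b) = cnt A1 A2 (a',b')" using sch_cnt[OF S] A by blast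
    then show "card {y \<in> UNIV. (x, y) \<in> B1 \<and> (y, z) \<in> B2} = card {y \<in> UNIV. (x', y) \<in> B1 \<and> (y, z') \<in> B2}"
      using key ab ab' by simp
  qed
qed

lemma transport_rel: assumes "is_rel S X" shows "is_rel (pair_image h ` S) (pair_image h X)"
proof -
  obtain T where T: "T \<subseteq> S" "X = \<Union>T" using assms unfolding is_rel_def by auto
  have "pair_image h X = \<Union>(pair_image h ` T)" unfolding T(2) pair_image_eq by auto
  moreover have "pair_image h ` T \<subseteq> pair_image h ` S" using T(1) by auto
  ultimately show ?thesis unfolding is_rel_def by blast
qed

lemma single_basis: assumes S: "is_scheme UNIV S" and r: "is_rel S {p}" shows "{p} \<in> S"
proof -
  have "bas S p \<subseteq> {p}" using r rel_iff[OF S] by auto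
  then have "bas S p = {p}" using sch_bas[OF S, of p] by auto
  then show ?thesis using sch_bas[OF S, of p] by simp
qed

lemma L1:
  fixes S :: "('a::finite \<times> 'a) set set"
  assumes S: "is_scheme UNIV S" and a: "is_rel S {(a,a)}" and X: "is_rel S X"
  shows "is_rel S (Id_on {y. (a,y) \<in> X})"
  unfolding rel_iff[OF S]
proof (intro ballI subsetI)
  fix p r' assume p: "p \<in> Id_on {y. (a,y) \<in> X}" and r': "r' \<in> bas S p"
  obtain q where q: "p = (q,q)" "(a,q) \<in> X" using p by auto
  have D: "{(a,a)} \<in> S" using single_basis[OF S a] .
  define E where "E = bas S (a,q)"
  have E: "E \<in> S" "(a,q) \<in> E" using sch_bas[OF S] unfolding E_def by auto
  have EX: "E \<subseteq> X" using X q rel_iff[OF S] unfolding E_def by blast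
  have Ec: "converse E \<in> S" using schD_conv[OF S] E by blast
  have "is_rel S Id" using sch_Id[OF S] .
  then have "bas S p \<subseteq> Id" using rel_iff[OF S] q by auto
  then obtain r where rr: "r' = (r,r)" using r' by auto
  have c1: "cnt (converse E) E (q,q) = cnt (converse E) E (r,r)"
  proof -
    have bq: "bas S p \<in> S" "p \<in> bas S p" using sch_bas[OF S] by auto
    have "cnt (converse E) E p = cnt (converse E) E r'" by (rule sch_cnt[OF S Ec E(1) bq(1) bq(2) r'])
    then show ?thesis using q(1) rr by simp
  qed
  have "a \<in> {y. (q, y) \<in> converse E \<and> (y, q) \<in> E}" using E by auto
  then have "cnt (converse E) E (q,q) \<noteq> 0" unfolding cnt_def by (auto simp: card_eq_0_iff)
  then have "cnt (converse E) E (r,r) \<noteq> 0" using c1 by simp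
  then obtain m where m: "(m, r) \<in> E" unfolding cnt_def by (auto simp: card_eq_0_iff)
  have c2: "cnt {(a,a)} E (a,q) = cnt {(a,a)} E (m,r)"
    by (rule sch_cnt[OF S D E(1) E(1) E(2) m])
  have "{y. (a, y) \<in> {(a,a)} \<and> (y, q) \<in> E} = {a}" using E by auto
  then have "cnt {(a,a)} E (a,q) = 1" unfolding cnt_pair by simp
  then have "cnt {(a,a)} E (m,r) = 1" using c2 by simp
  then have "{y. (m, y) \<in> {(a,a)} \<and> (y, r) \<in> E} \<noteq> {}" unfolding cnt_pair by (metis card.empty zero_neq_one)
  then have "m = a" by blast
  then show "r' \<in> Id_on {y. (a,y) \<in> X}" using m EX rr by auto
qed

lemma triv:
  fixes S :: "('a::finite \<times> 'a) set set"
  assumes S: "is_scheme UNIV S" and d: "\<And>x. is_rel S {(x,x)}"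
  shows "trivial_scheme S"
  unfolding trivial_scheme_def
proof
  fix B assume B: "B \<in> S"
  then obtain x z where xz: "(x,z) \<in> B" using schD_ne[OF S] B by fast
  have Dx: "{(x,x)} \<in> S" and Dz: "{(z,z)} \<in> S" using single_basis[OF S d] by auto
  have "B \<subseteq> {(x,z)}"
  proof
    fix p assume p: "p \<in> B"
    obtain x' z' where pp: "p = (x',z')" by force
    have "cnt {(x,x)} B (x,z) = cnt {(x,x)} B (x',z')" using sch_cnt[OF S Dx B B] xz p pp by blast
    moreover have "{y. (x, y) \<in> {(x,x)} \<and> (y, z) \<in> B} = {x}" using xz by auto
    then have "cnt {(x,x)} B (x,z) = 1" unfolding cnt_pair by simp
    ultimately have "cnt {(x,x)} B (x',z') = 1" by simp
    then have "{y. (x', y) \<in> {(x,x)} \<and> (y, z') \<in> B} \<noteq> {}" unfolding cnt_pair by (metis card.empty zero_neq_one)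
    then have "x' = x" by blast
    have "cnt B {(z,z)} (x,z) = cnt B {(z,z)} (x',z')" using sch_cnt[OF S B Dz B] xz p pp by blast
    moreover have "{y. (x, y) \<in> B \<and> (y, z) \<in> {(z,z)}} = {z}" using xz by auto
    then have "cnt B {(z,z)} (x,z) = 1" unfolding cnt_pair by simp
    ultimately have "cnt B {(z,z)} (x',z') = 1" by simp
    then have "{y. (x', y) \<in> B \<and> (y, z') \<in> {(z,z)}} \<noteq> {}" unfolding cnt_pair by (metis card.empty zero_neq_one)
    then have "z' = z" by blast
    show "p \<in> {(x,z)}" using pp \<open>x' = x\<close> \<open>z' = z\<close> by simp
  qed
  then show "\<exists>p. B = {p}" using xz by blast
qed



abbreviation U where "U \<equiv> ring_units"

lemma unit_mult: "a \<in> ring_units \<Longrightarrow> b \<in> ring_units \<Longrightarrow> a * b \<in> ring_units"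
  unfolding ring_units_def using mult_dvd_mono[of a 1 b 1] by simp

lemma unit_inv: assumes "a \<in> ring_units" shows "\<exists>b. a * b = 1 \<and> b \<in> ring_units"
proof -
  have "a dvd 1" using assms unfolding ring_units_def by simp
  then obtain b where b: "1 = a * b" by (rule dvdE)
  then have "1 = b * a" by (simp add: mult.commute)
  then have "b dvd 1" by (rule dvdI)
  then show ?thesis using b unfolding ring_units_def by auto
qed

lemma cancel_l: "(a::'a::comm_ring_1) * a' = 1 \<Longrightarrow> a' * (a * y) = y"
proof -
  assume h: "a * a' = 1"
  have "a' * (a * y) = (a * a') * y" by (simp add: mult_ac)
  then show ?thesis using h by simp
qed

lemma one_unit: "1 \<in> ring_units" unfolding ring_units_def by simp

definition Bc :: "'a::comm_ring_1 set \<Rightarrow> 'a \<Rightarrow> ('a \<times> 'a) set" where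
  "Bc K r = {(x, y). y - x \<in> (\<lambda>k. r * k) ` K}"

lemma Cyc_eq: "Cyc K = range (Bc K)" unfolding Cyc_def Bc_def by auto

definition aff :: "'a::comm_ring_1 \<Rightarrow> 'a \<Rightarrow> 'a \<Rightarrow> 'a" where "aff a b y = a * y + b"

lemma aff_inv: "a * a' = 1 \<Longrightarrow> aff a' (- (a' * b)) (aff a b y) = y"
proof -
  assume h: "a * a' = 1"
  have "aff a' (- (a' * b)) (aff a b y) = a' * (a * y)" unfolding aff_def by (simp add: algebra_simps)
  then show ?thesis using cancel_l[OF h] by simp
qed

lemma aff_bij: assumes "a \<in> ring_units" shows "bij (aff a b)"
proof -
  obtain a' where a': "a * a' = 1" using unit_inv[OF assms] by auto
  have a'': "a' * a = 1" using a' by (simp add: mult.commute)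
  have c: "\<And>z. a * (a' * z) = z" using cancel_l[OF a''] .
  have r: "aff a b (aff a' (- (a' * b)) y) = y" for y
    unfolding aff_def by (simp add: distrib_left right_diff_distrib c)
  have l: "aff a' (- (a' * b)) (aff a b y) = y" for y using aff_inv[OF a'] .
  show ?thesis
  proof (rule bijI')
    show "(aff a b x = aff a b y) = (x = y)" for x y using l by metis
    show "\<exists>x. y = aff a b x" for y using r by metis
  qed
qed

lemma aff_Bc: assumes a: "a \<in> ring_units" shows "pair_image (aff a b) (Bc K r) = Bc K (a * r)"
proof -
  obtain a' where a': "a * a' = 1" using unit_inv[OF a] by auto
  show ?thesis
  proof
    show "pair_image (aff a b) (Bc K r) \<subseteq> Bc K (a * r)"
    proof
      fix p assume "p \<in> pair_image (aff a b) (Bc K r)"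
      then obtain x y k where p: "p = (aff a b x, aff a b y)" and k: "k \<in> K" "y - x = r * k"
        unfolding pair_image_def Bc_def by auto
      have "aff a b y - aff a b x = a * (y - x)" unfolding aff_def by (simp add: algebra_simps)
      also have "\<dots> = a * r * k" using k by (simp add: mult.assoc)
      finally show "p \<in> Bc K (a * r)" unfolding Bc_def p using k by auto
    qed
    show "Bc K (a * r) \<subseteq> pair_image (aff a b) (Bc K r)"
    proof
      fix p assume p: "p \<in> Bc K (a * r)"
      obtain u w where uw: "p = (u,w)" by force
      obtain k where k: "k \<in> K" "w - u = a * r * k" using p uw unfolding Bc_def by auto
      define x where "x = a' * (u - b)"
      define y where "y = a' * (w - b)"
      have c2: "\<And>z. a * (a' * z) = z" using cancel_l[of a' a] a' by (simp add: mult.commute)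
      have "aff a b x = u" "aff a b y = w" unfolding aff_def x_def y_def by (simp_all add: c2)
      moreover have "y - x = r * k"
      proof -
        have "y - x = a' * (w - u)" unfolding x_def y_def by (simp add: algebra_simps)
        also have "\<dots> = (a' * a) * r * k" using k by (simp add: algebra_simps)
        finally show ?thesis using a' by (simp add: mult.commute)
      qed
      ultimately show "p \<in> pair_image (aff a b) (Bc K r)"
        unfolding pair_image_def Bc_def uw using k by (auto intro!: image_eqI[of _ _ "(x,y)"])
    qed
  qed
qed

lemma cyc_transport: assumes a: "a \<in> ring_units" and X: "is_rel (Cyc K) X"
  shows "is_rel (Cyc K) (pair_image (aff a b) X)"
proof -
  obtain T where T: "T \<subseteq> Cyc K" "X = \<Union>T" using X unfolding is_rel_def by auto
  have "pair_image (aff a b) X = \<Union>(pair_image (aff a b) ` T)" unfolding T(2) pair_image_eq by auto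
  moreover have "pair_image (aff a b) ` T \<subseteq> Cyc K" using T(1) aff_Bc[OF a] unfolding Cyc_eq by auto
  ultimately show ?thesis unfolding is_rel_def by blast
qed

lemma Uc_rel:
  fixes K :: "'a::comm_ring_1 set"
  assumes K: "unit_subgroup K"
  shows "is_rel (Cyc K) {(p, q). q - p \<in> ring_units}"
proof -
  have KU: "K \<subseteq> ring_units" and K1: "1 \<in> K" using K unfolding unit_subgroup_def by auto
  have "{(p, q). q - p \<in> ring_units} = \<Union>(Bc K ` ring_units)"
  proof (rule set_eqI, rule iffI)
    fix z :: "'a \<times> 'a" assume z: "z \<in> {(p, q). q - p \<in> ring_units}"
    obtain p q where pq: "z = (p,q)" by force
    have "q - p \<in> ring_units" using z pq by simp
    moreover have "z \<in> Bc K (q - p)" unfolding Bc_def pq using K1 by (auto intro: image_eqI[of _ _ 1])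
    ultimately show "z \<in> \<Union>(Bc K ` ring_units)" by blast
  next
    fix z :: "'a \<times> 'a" assume "z \<in> \<Union>(Bc K ` ring_units)"
    then obtain r where r: "r \<in> ring_units" "z \<in> Bc K r" by auto
    obtain p q where pq: "z = (p,q)" by force
    obtain k where k: "k \<in> K" "q - p = r * k" using r(2) pq unfolding Bc_def by auto
    have "r * k \<in> ring_units" using unit_mult r(1) KU k(1) by blast
    then show "z \<in> {(p, q). q - p \<in> ring_units}" using k pq by simp
  qed
  then show ?thesis unfolding is_rel_def Cyc_eq
    by (intro exI[of _ "Bc K ` ring_units"] conjI) auto
qed



lemma rel_diff:
  assumes disj: "\<forall>A\<in>T0. \<forall>B\<in>T0. A \<noteq> B \<longrightarrow> A \<inter> B = {}"
    and Z: "is_rel T0 Z" and Y: "is_rel T0 Y"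
  shows "is_rel T0 (Z - Y)"
proof -
  obtain T1 where T1: "T1 \<subseteq> T0" "Z = \<Union>T1" using Z unfolding is_rel_def by auto
  obtain T2 where T2: "T2 \<subseteq> T0" "Y = \<Union>T2" using Y unfolding is_rel_def by auto
  have "Z - Y = \<Union>(T1 - T2)"
  proof (rule set_eqI, rule iffI)
    fix p assume "p \<in> Z - Y" then show "p \<in> \<Union>(T1 - T2)" using T1(2) T2(2) by blast
  next
    fix p assume "p \<in> \<Union>(T1 - T2)"
    then obtain A where A: "A \<in> T1" "A \<notin> T2" "p \<in> A" by auto
    have "p \<notin> Y"
    proof
      assume "p \<in> Y" then obtain B where B: "B \<in> T2" "p \<in> B" using T2(2) by auto
      have "A \<noteq> B" using A(2) B(1) by auto
      moreover have "A \<in> T0" "B \<in> T0" using A(1) B(1) T1(1) T2(1) by auto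
      ultimately have "A \<inter> B = {}" using disj by blast
      then show False using A(3) B(2) by blast
    qed
    then show "p \<in> Z - Y" using A T1(2) by auto
  qed
  moreover have "T1 - T2 \<subseteq> T0" using T1(1) by auto
  ultimately show ?thesis unfolding is_rel_def by (intro exI[of _ "T1 - T2"]) simp
qed

lemma mult_bij: assumes "a \<in> ring_units" shows "bij (\<lambda>x::'a::comm_ring_1. x * a)"
proof -
  have "(\<lambda>x. x * a) = aff a 0" by (rule ext) (simp add: aff_def mult.commute)
  then show ?thesis using aff_bij[OF assms] by simp
qed

lemma hyp_extract:
  fixes K :: "'a::{comm_ring_1,finite} set"
  assumes K: "unit_subgroup K" and T: "mult_sring_trivial K" and x: "x \<in> ring_units"
  shows "\<exists>Y. is_rel (coherent_closure UNIV (Cyc K) {{(0,0)}}) Y \<and> {y \<in> ring_units. (1,y) \<in> Y} = {x}"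
proof -
  define C0 where "C0 = coherent_closure UNIV (Cyc K) {{(0::'a,0)}}"
  have S0: "is_scheme UNIV C0" using admD_sch[OF closure_adm] unfolding C0_def .
  define R0 where "R0 = restrict_scheme C0 ring_units"
  define G where "G = (right_mult_group :: ('a \<Rightarrow> 'a) set)"
  define Inv where "Inv Z \<longleftrightarrow> is_rel R0 Z \<and> (\<forall>g\<in>G. pair_image g Z = Z)" for Z
  have R0E: "A \<in> R0 \<Longrightarrow> \<exists>B. B \<in> C0 \<and> A = B \<inter> (U \<times> U)" for A unfolding R0_def restrict_scheme_def by auto
  have disj: "\<forall>A\<in>R0. \<forall>B\<in>R0. A \<noteq> B \<longrightarrow> A \<inter> B = {}"
  proof (intro ballI impI)
    fix A B assume A: "A \<in> R0" and B: "B \<in> R0" and AB: "A \<noteq> B"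
    obtain A' where A': "A' \<in> C0" "A = A' \<inter> (U \<times> U)" using R0E[OF A] by blast
    obtain B' where B': "B' \<in> C0" "B = B' \<inter> (U \<times> U)" using R0E[OF B] by blast
    have "A' \<noteq> B'" using AB A' B' by auto
    then have "A' \<inter> B' = {}" using schD_dj[OF S0] A'(1) B'(1) by blast
    then show "A \<inter> B = {}" using A'(2) B'(2) by blast
  qed
  have Gbij: "\<And>g. g \<in> G \<Longrightarrow> bij g" unfolding G_def right_mult_group_def using mult_bij by auto
  have UU: "Inv (U \<times> U)"
    unfolding Inv_def
  proof
    have "\<Union>R0 = U \<times> U"
    proof
      show "\<Union>R0 \<subseteq> U \<times> U" using R0E by blast
      show "U \<times> U \<subseteq> \<Union>R0"
      proof
        fix p :: "'a \<times> 'a" assume p: "p \<in> U \<times> U"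
        have "p \<in> \<Union>C0" using schD_cov[OF S0] by simp
        then obtain B where B: "B \<in> C0" "p \<in> B" by (rule UnionE)
        then have "B \<inter> (U \<times> U) \<in> R0" unfolding R0_def restrict_scheme_def using p by blast
        then show "p \<in> \<Union>R0" using B p by blast
      qed
    qed
    then show "is_rel R0 (U \<times> U)" unfolding is_rel_def by (intro exI[of _ R0]) simp
    show "\<forall>g\<in>G. pair_image g (U \<times> U) = U \<times> U"
    proof
      fix g assume g: "g \<in> G"
      then obtain a where a: "a \<in> U" "g = (\<lambda>x. x * a)" unfolding G_def right_mult_group_def by auto
      obtain a' where a': "a * a' = 1" "a' \<in> U" using unit_inv[OF a(1)] by auto
      have "g y \<in> U \<longleftrightarrow> y \<in> U" for y
      proof
        assume "g y \<in> U" then have "y * a * a' \<in> U" using a a' unit_mult by auto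
        then show "y \<in> U" using a' by (simp add: mult.assoc)
      next
        assume "y \<in> U" then show "g y \<in> U" using a unit_mult by auto
      qed
      then show "pair_image g (U \<times> U) = U \<times> U" using inv_iff[OF Gbij[OF g]] by auto
    qed
  qed
  have finZ: "finite Z" for Z :: "('a \<times> 'a) set" by simp
  have "Inv (U \<times> U) \<and> (1,x) \<in> U \<times> U" using UU x one_unit by auto
  then obtain Z where Z: "Inv Z \<and> (1,x) \<in> Z" and Zmin: "\<And>Z'. Inv Z' \<and> (1,x) \<in> Z' \<Longrightarrow> card Z \<le> card Z'"
    using ex_has_least_nat[of "\<lambda>Z. Inv Z \<and> (1,x) \<in> Z" "U \<times> U" card] by blast
  have ZI: "Z \<in> invariant_scheme R0 G"
    unfolding invariant_scheme_def mem_Collect_eq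
  proof (intro conjI allI impI)
    show "is_rel R0 Z" "\<forall>g\<in>G. pair_image g Z = Z" using Z unfolding Inv_def by auto
    show "Z \<noteq> {}" using Z by auto
    fix Y assume Y: "is_rel R0 Y \<and> Y \<noteq> {} \<and> Y \<subseteq> Z \<and> (\<forall>g\<in>G. pair_image g Y = Y)"
    show "Y = Z"
    proof (cases "(1,x) \<in> Y")
      case True
      then have "Inv Y \<and> (1,x) \<in> Y" using Y unfolding Inv_def by blast
      then have "card Z \<le> card Y" using Zmin by blast
      then show ?thesis using Y card_seteq[OF finZ, of Y Z] by blast
    next
      case False
      have "Inv (Z - Y)" unfolding Inv_def
      proof
        show "is_rel R0 (Z - Y)" using rel_diff[OF disj] Z Y unfolding Inv_def by blast
        show "\<forall>g\<in>G. pair_image g (Z - Y) = Z - Y"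
        proof
          fix g assume g: "g \<in> G"
          have gb: "bij g" using Gbij[OF g] .
          have "pair_image g Z = Z" using g Z unfolding Inv_def by blast
          then have zz: "\<forall>u w. (g u, g w) \<in> Z \<longleftrightarrow> (u, w) \<in> Z" unfolding inv_iff[OF gb] .
          have "pair_image g Y = Y" using g Y by blast
          then have yy: "\<forall>u w. (g u, g w) \<in> Y \<longleftrightarrow> (u, w) \<in> Y" unfolding inv_iff[OF gb] .
          have "\<forall>u w. (g u, g w) \<in> Z - Y \<longleftrightarrow> (u, w) \<in> Z - Y" using zz yy by simp
          then show "pair_image g (Z - Y) = Z - Y" unfolding inv_iff[OF gb] .
        qed
      qed
      then have "card Z \<le> card (Z - Y)" using Zmin Z False by blast
      then have "Z - Y = Z" using card_seteq[OF finZ, of "Z - Y" Z] by blast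
      then show ?thesis using Y by blast
    qed
  qed
  have "{y. (1, y) \<in> Z} \<in> mult_sring_basic_sets K"
    unfolding mult_sring_basic_sets_def Cyc_prime_def
    using ZI unfolding R0_def C0_def G_def by blast
  then obtain z where "{y. (1, y) \<in> Z} = {z}" using T unfolding mult_sring_trivial_def by blast
  then have Z1: "{y. (1, y) \<in> Z} = {x}" using Z by auto
  obtain T0 where T0: "T0 \<subseteq> R0" "Z = \<Union>T0" using Z unfolding Inv_def is_rel_def by auto
  define Y where "Y = \<Union>{B\<in>C0. B \<inter> (U \<times> U) \<in> T0}"
  have "is_rel C0 Y" unfolding Y_def is_rel_def by (intro exI[of _ "{B\<in>C0. B \<inter> (U \<times> U) \<in> T0}"]) auto
  moreover have "{y \<in> U. (1,y) \<in> Y} = {x}"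
  proof (rule set_eqI, rule iffI)
    fix y assume "y \<in> {y \<in> U. (1,y) \<in> Y}"
    then obtain B where B: "B \<in> C0" "B \<inter> (U \<times> U) \<in> T0" "(1,y) \<in> B" "y \<in> U" unfolding Y_def by auto
    then have "(1,y) \<in> B \<inter> (U \<times> U)" using one_unit by auto
    then have "(1,y) \<in> Z" using B(2) T0(2) by blast
    then show "y \<in> {x}" using Z1 by auto
  next
    fix y assume "y \<in> {x}"
    then have y: "y = x" by simp
    obtain A where A: "A \<in> T0" "(1,x) \<in> A" using Z T0(2) by auto
    then obtain B where B: "B \<in> C0" "A = B \<inter> (U \<times> U)" using T0(1) R0E by blast
    then show "y \<in> {y \<in> U. (1,y) \<in> Y}" unfolding Y_def using A y x by auto
  qed
  ultimately show ?thesis unfolding C0_def by blast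
qed



lemma principal_ideal: "is_ideal {r * (c::'a::comm_ring_1) | r. True}"
  unfolding is_ideal_def
proof (intro conjI ballI allI)
  show "0 \<in> {r * c |r. True}" by (auto intro: exI[of _ 0])
  fix x y assume "x \<in> {r * c |r. True}" "y \<in> {r * c |r. True}"
  then obtain r1 r2 where "x = r1 * c" "y = r2 * c" by auto
  then have "x + y = (r1 + r2) * c" by (simp add: distrib_right)
  then show "x + y \<in> {r * c |r. True}" by blast
next
  fix x r assume "x \<in> {r * c |r. True}"
  then obtain r1 where "x = r1 * c" by auto
  then have "r * x = (r * r1) * c" by (simp add: mult.assoc)
  then show "r * x \<in> {r * c |r. True}" by blast
qed

lemma local_one_minus:
  fixes y :: "'a::{comm_ring_1,finite}"
  assumes L: "local_ring TYPE('a)" and y: "y \<notin> ring_units"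
  shows "1 - y \<in> ring_units"
proof (rule ccontr)
  assume y1: "1 - y \<notin> ring_units"
  have ex: "\<exists>J. maximal_ideal J \<and> c \<in> J" if c: "c \<notin> ring_units" for c :: 'a
  proof -
    define P where "P J \<longleftrightarrow> is_ideal J \<and> 1 \<notin> J \<and> {r * c | r. True} \<subseteq> J" for J :: "'a set"
    have "1 \<notin> {r * c | r. True}"
    proof
      assume "1 \<in> {r * c | r. True}"
      then obtain r where "1 = r * c" by auto
      then have "1 = c * r" by (simp add: mult.commute)
      then have "c dvd 1" by (rule dvdI)
      then show False using c unfolding ring_units_def by simp
    qed
    then have P0: "P {r * c | r. True}" unfolding P_def using principal_ideal[of c] by simp
    have bd: "\<forall>J. P J \<longrightarrow> card J < Suc (card (UNIV :: 'a set))"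
      by (simp add: card_mono le_imp_less_Suc)
    obtain J where J: "P J" and Jmax: "\<forall>J'. P J' \<longrightarrow> card J' \<le> card J"
      using Lattices_Big.ex_has_greatest_nat[of P _ card "Suc (card (UNIV :: 'a set))", OF P0 bd] by blast
    have "maximal_ideal J" unfolding maximal_ideal_def
    proof (intro conjI allI impI)
      show "is_ideal J" "1 \<notin> J" using J unfolding P_def by auto
      fix J' assume J': "is_ideal J' \<and> 1 \<notin> J' \<and> J \<subseteq> J'"
      then have "P J'" using J unfolding P_def by auto
      then have "card J' \<le> card J" using Jmax by auto
      then show "J' = J" using J' card_seteq[of J' J] by simp
    qed
    moreover have "c \<in> J" using J unfolding P_def by (auto intro: exI[of _ 1])
    ultimately show ?thesis by blast
  qed
  obtain J1 where J1: "maximal_ideal J1" "y \<in> J1" using ex[OF y] by blast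
  obtain J2 where J2: "maximal_ideal J2" "1 - y \<in> J2" using ex[OF y1] by blast
  have "\<exists>!I::'a set. maximal_ideal I" using L unfolding local_ring_def .
  then have "J1 = J2" using J1(1) J2(1) by blast
  have idl: "is_ideal J1" and n1: "1 \<notin> J1" using J1(1) unfolding maximal_ideal_def by auto
  have "\<forall>x\<in>J1. \<forall>y\<in>J1. x + y \<in> J1" using idl unfolding is_ideal_def by simp
  then have "y + (1 - y) \<in> J1" using J1(2) J2(2) \<open>J1 = J2\<close> by blast
  then show False using n1 by simp
qed

context
  fixes K :: "'a::{comm_ring_1,finite} set"
  assumes K: "unit_subgroup K" and T: "mult_sring_trivial K"
begin

lemma K1':
  assumes S: "adm (Cyc K) {{(0,0)}} S" and one: "is_rel S {(1,1)}" and x: "x \<in> ring_units"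
  shows "is_rel S {(x,x)}"
proof -
  have Ss: "is_scheme UNIV S" using admD_sch[OF S] .
  obtain Y where Y: "is_rel (coherent_closure UNIV (Cyc K) {{(0,0)}}) Y" "{y \<in> U. (1,y) \<in> Y} = {x}"
    using hyp_extract[OF K T x] by blast
  have YS: "is_rel S Y" using closure_min[OF S Y(1)] .
  have zero: "is_rel S {(0,0)}" using admD_M[OF S] by simp
  have UcS: "is_rel S {(p, q). q - p \<in> ring_units}" using admD_C[OF S Uc_rel[OF K]] .
  have a: "is_rel S (Id_on {y. (1,y) \<in> Y})" using L1[OF Ss one YS] .
  have b: "is_rel S (Id_on {y. (0,y) \<in> {(p, q). q - p \<in> ring_units}})" using L1[OF Ss zero UcS] .
  have "Id_on {y. (1,y) \<in> Y} \<inter> Id_on {y. (0,y) \<in> {(p, q). q - p \<in> ring_units}} = Id_on {y \<in> U. (1,y) \<in> Y}"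
    by auto
  also have "\<dots> = {(x,x)}" using Y(2) by auto
  finally show ?thesis using rel_Int[OF Ss a b] by simp
qed

lemma K1:
  assumes S: "is_scheme UNIV S" and cyc: "\<And>X. is_rel (Cyc K) X \<Longrightarrow> is_rel S X"
    and t: "is_rel S {(t,t)}" and ts: "is_rel S {(t+s,t+s)}" and s: "s \<in> ring_units" and x: "x \<in> ring_units"
  shows "is_rel S {(s*x+t, s*x+t)}"
proof -
  obtain s' where s': "s * s' = 1" "s' \<in> U" using unit_inv[OF s] by auto
  define \<phi> where "\<phi> = aff s t"
  define \<psi> where "\<psi> = aff s' (- (s' * t))"
  have pf: "\<psi> (\<phi> y) = y" for y unfolding \<phi>_def \<psi>_def using aff_inv[OF s'(1)] .
  have c: "\<And>z. s * (s' * z) = z" using cancel_l[of s' s] s'(1) by (simp add: mult.commute)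
  have fp: "\<phi> (\<psi> y) = y" for y unfolding \<phi>_def \<psi>_def aff_def
    by (simp add: distrib_left right_diff_distrib c)
  define S' where "S' = pair_image \<psi> ` S"
  have hback: "pair_image \<phi> ` S' = S" unfolding S'_def image_image
  proof -
    have pp: "\<And>X. pair_image \<phi> (pair_image \<psi> X) = X" by (rule pair_image_inv) (rule fp)
    show "(\<lambda>x. pair_image \<phi> (pair_image \<psi> x)) ` S = S" by (simp add: pp)
  qed
  have Ssch: "is_scheme UNIV S'" unfolding S'_def using transport_scheme[OF S aff_bij[OF s'(2)]] \<psi>_def by simp
  have "adm (Cyc K) {{(0,0)}} S'" unfolding adm_def
  proof (intro conjI allI impI ballI)
    show "is_scheme UNIV S'" by fact
    fix X assume X: "is_rel (Cyc K) X"
    have "is_rel S (pair_image \<phi> X)" using cyc cyc_transport[OF s X] \<phi>_def by simp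
    then have "is_rel S' (pair_image \<psi> (pair_image \<phi> X))" unfolding S'_def by (rule transport_rel)
    moreover have "pair_image \<psi> (pair_image \<phi> X) = X" by (rule pair_image_inv) (rule pf)
    ultimately show "is_rel S' X" by simp
  next
    fix X assume "X \<in> {{(0::'a,0::'a)}}"
    then have X: "X = {(0,0)}" by simp
    have "\<psi> t = 0" unfolding \<psi>_def aff_def by simp
    then show "is_rel S' X" using transport_rel[OF t, of \<psi>] X unfolding S'_def pair_image_single by simp
  qed
  moreover have "is_rel S' {(1,1)}"
  proof -
    have "\<psi> (t+s) = s' * s" unfolding \<psi>_def aff_def by (simp add: algebra_simps)
    then have "\<psi> (t+s) = 1" using s'(1) by (simp add: mult.commute)
    then show ?thesis using transport_rel[OF ts, of \<psi>] unfolding S'_def pair_image_single by simp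
  qed
  ultimately have "is_rel S' {(x,x)}" using K1'[OF _ _ x] by blast
  then have "is_rel (pair_image \<phi> ` S') (pair_image \<phi> {(x,x)})" by (rule transport_rel)
  then show ?thesis using hback unfolding pair_image_single \<phi>_def aff_def by simp
qed

end



lemma cnt_inv: assumes h: "bij h" and X: "pair_image h X = X" and Y: "pair_image h Y = Y"
  shows "cnt X Y (h x, h z) = cnt X Y (x, z)"
proof -
  have iX: "(h u, h w) \<in> X \<longleftrightarrow> (u,w) \<in> X" for u w using inv_iff[OF h] X by blast
  have iY: "(h u, h w) \<in> Y \<longleftrightarrow> (u,w) \<in> Y" for u w using inv_iff[OF h] Y by blast
  have "{y. (h x, y) \<in> X \<and> (y, h z) \<in> Y} = h ` {y. (x, y) \<in> X \<and> (y, z) \<in> Y}"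
  proof (rule set_eqI, rule iffI)
    fix y assume y: "y \<in> {y. (h x, y) \<in> X \<and> (y, h z) \<in> Y}"
    obtain y0 where "y = h y0" using bij_is_surj[OF h] by (metis surjD)
    then show "y \<in> h ` {y. (x, y) \<in> X \<and> (y, z) \<in> Y}" using y iX iY by auto
  qed (use iX iY in auto)
  then show ?thesis unfolding cnt_def
    using card_image[OF inj_on_subset[OF bij_is_inj[OF h]]] by simp
qed

lemma coh_inv: assumes h: "bij (h :: 'a::finite \<Rightarrow> 'a)" shows "coh_alg {X. pair_image h X = X}"
proof -
  have I: "X \<in> {X. pair_image h X = X} \<longleftrightarrow> (\<forall>x y. (h x, h y) \<in> X \<longleftrightarrow> (x, y) \<in> X)" for X
    using inv_iff[OF h] by simp
  have inj: "h x = h y \<longleftrightarrow> x = y" for x y using bij_is_inj[OF h] by (auto dest: injD)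
  show ?thesis
  proof (rule cohI)
    show "UNIV \<in> {X. pair_image h X = X}" unfolding I by simp
    show "Id \<in> {X. pair_image h X = X}" unfolding I using inj by simp
    show "- X \<in> {X. pair_image h X = X}" if "X \<in> {X. pair_image h X = X}" for X using that unfolding I by simp
    show "X \<inter> Y \<in> {X. pair_image h X = X}" if "X \<in> {X. pair_image h X = X}" "Y \<in> {X. pair_image h X = X}" for X Y
      using that unfolding I by simp
    show "converse X \<in> {X. pair_image h X = X}" if "X \<in> {X. pair_image h X = X}" for X using that unfolding I by simp
    show "{p. cnt X Y p = c} \<in> {X. pair_image h X = X}" if "X \<in> {X. pair_image h X = X}" "Y \<in> {X. pair_image h X = X}" for X Y c
    proof -
      have "pair_image h X = X" "pair_image h Y = Y" using that by auto
      then have "cnt X Y (h x, h z) = cnt X Y (x, z)" for x z using cnt_inv[OF h] by blast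
      then show ?thesis unfolding I by simp
    qed
  qed
qed

lemma pair_image_comp: "pair_image (g \<circ> f) X = pair_image g (pair_image f X)"
  unfolding pair_image_eq image_image by (simp add: map_prod_def case_prod_beta comp_def)

lemma fix_rel: assumes g: "\<forall>B\<in>C. pair_image g B = B" and X: "is_rel C X"
  shows "pair_image g X = X"
proof -
  obtain T where T: "T \<subseteq> C" "X = \<Union>T" using X unfolding is_rel_def by auto
  have "pair_image g X = \<Union>(pair_image g ` T)" unfolding T(2) pair_image_eq by auto
  also have "\<dots> = \<Union>T"
  proof -
    have "pair_image g ` T = (\<lambda>B. B) ` T" by (rule image_cong) (use g T(1) in auto)
    then show ?thesis by simp
  qed
  finally show ?thesis using T by simp
qed

lemma Bc_K: assumes K: "unit_subgroup K" and a: "a \<in> K" shows "Bc K (a * r) = Bc K r"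
proof -
  obtain a' where a': "a' \<in> K" "a * a' = 1" using K a unfolding unit_subgroup_def by blast
  have "(\<lambda>k. a * r * k) ` K = (\<lambda>k. r * k) ` K"
  proof (rule set_eqI, rule iffI)
    fix z assume "z \<in> (\<lambda>k. a * r * k) ` K"
    then obtain k where k: "k \<in> K" "z = a * r * k" by auto
    then have "z = r * (a * k)" by (simp add: mult_ac)
    with k(1) have "k \<in> K" "z = r * (a * k)" by auto
    moreover have "a * k \<in> K" using K a \<open>k \<in> K\<close> unfolding unit_subgroup_def by auto
    ultimately show "z \<in> (\<lambda>k. r * k) ` K" by auto
  next
    fix z assume "z \<in> (\<lambda>k. r * k) ` K"
    then obtain k where k: "k \<in> K" "z = r * k" by auto
    have "a * r * (a' * k) = r * ((a * a') * k)" by (simp add: mult_ac)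
    then have "z = a * r * (a' * k)" using a'(2) k(2) by simp
    moreover have "a' * k \<in> K" using K a' k unfolding unit_subgroup_def by auto
    ultimately show "z \<in> (\<lambda>k. a * r * k) ` K" by auto
  qed
  then show ?thesis unfolding Bc_def by simp
qed

theorem theorem4p4:
  fixes K :: "'a::{comm_ring_1,finite} set"
  assumes "local_ring TYPE('a)"
    and "unit_subgroup K"
    and "mult_sring_trivial K"
  shows "trivial_scheme (coherent_closure UNIV (Cyc K) {{(0, 0)}, {(1, 1)}})
         \<and> Aut UNIV (Cyc K) = Gamma_affine K"
proof -
  note L = assms(1) and K = assms(2) and T = assms(3)
  define C01 where "C01 = coherent_closure UNIV (Cyc K) {{(0::'a, 0)}, {(1, 1)}}"
  have A: "adm (Cyc K) {{(0::'a, 0)}, {(1, 1)}} C01" unfolding C01_def by (rule closure_adm)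
  have S: "is_scheme UNIV C01" and cyc: "\<And>X. is_rel (Cyc K) X \<Longrightarrow> is_rel C01 X"
    and z: "is_rel C01 {(0,0)}" and o: "is_rel C01 {(1,1)}" using A unfolding adm_def by auto
  have units: "is_rel C01 {(x,x)}" if x: "x \<in> ring_units" for x
    using K1[OF K T S cyc, of 0 1 x] z o one_unit x by simp
  have m1: "-1 \<in> (ring_units :: 'a set)" unfolding ring_units_def by simp
  have all: "is_rel C01 {(y,y)}" for y
  proof (cases "y \<in> ring_units")
    case True then show ?thesis using units by simp
  next
    case False
    then have "1 - y \<in> ring_units" using local_one_minus[OF L] by simp
    then show ?thesis using K1[OF K T S cyc, of 1 "-1" "1 - y"] z o m1 by simp
  qed
  have part1: "trivial_scheme C01" using triv[OF S all] .
  have "Aut UNIV (Cyc K) = Gamma_affine K"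
  proof
    show "Gamma_affine K \<subseteq> Aut UNIV (Cyc K)"
    proof
      fix f assume "f \<in> Gamma_affine K"
      then obtain a b where ab0: "a \<in> K" "f = (\<lambda>x. a * x + b)" unfolding Gamma_affine_def by auto
      have "f = aff a b" using ab0(2) by (simp add: aff_def fun_eq_iff)
      note ab = ab0(1) this
      have aU: "a \<in> ring_units" using K ab unfolding unit_subgroup_def by auto
      have "pair_image f B = B" if BC: "B \<in> Cyc K" for B
      proof -
        obtain r where "B = Bc K r" using BC unfolding Cyc_eq by auto
        then show ?thesis using aff_Bc[OF aU] Bc_K[OF K ab(1)] ab(2) by simp
      qed
      then show "f \<in> Aut UNIV (Cyc K)" unfolding Aut_def using aff_bij[OF aU] ab(2) by auto
    qed
  next
    show "Aut UNIV (Cyc K) \<subseteq> Gamma_affine K"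
    proof
      fix f assume "f \<in> Aut UNIV (Cyc K)"
      then have fb: "bij f" and ff: "\<forall>B\<in>Cyc K. pair_image f B = B" unfolding Aut_def by auto
      define a where "a = f 1 - f 0"
      define b where "b = f 0"
      have 1: "1 \<in> K" using K unfolding unit_subgroup_def by auto
      have "(0,1) \<in> Bc K 1" unfolding Bc_def using 1 by auto
      then have "(f 0, f 1) \<in> pair_image f (Bc K 1)" unfolding pair_image_def by force
      moreover have "pair_image f (Bc K 1) = Bc K 1" using ff unfolding Cyc_eq by blast
      ultimately have "(f 0, f 1) \<in> Bc K 1" by simp
      then have aK: "a \<in> K" unfolding Bc_def a_def by auto
      obtain a' where a': "a' \<in> K" "a * a' = 1" using K aK unfolding unit_subgroup_def by blast
      have a'U: "a' \<in> ring_units" using K a' unfolding unit_subgroup_def by auto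
      define h where "h = aff a' (- (a' * b)) \<circ> f"
      have hb: "bij h" unfolding h_def using bij_comp[OF fb aff_bij[OF a'U]] .
      have g: "\<forall>B\<in>Cyc K. pair_image (aff a' (- (a' * b))) B = B"
        using aff_Bc[OF a'U] Bc_K[OF K a'(1)] unfolding Cyc_eq by auto
      obtain Sh where Sh: "is_scheme UNIV Sh" "\<And>X. is_rel Sh X \<longleftrightarrow> pair_image h X = X"
        using A1[OF coh_inv[OF hb]] by auto
      have "adm (Cyc K) {{(0::'a, 0)}, {(1, 1)}} Sh" unfolding adm_def
      proof (intro conjI allI impI ballI)
        show "is_scheme UNIV Sh" by fact
        fix X assume "is_rel (Cyc K) X"
        then show "is_rel Sh X" unfolding Sh(2) h_def pair_image_comp
          using fix_rel[OF ff] fix_rel[OF g] by simp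
      next
        fix X assume X: "X \<in> {{(0::'a, 0::'a)}, {(1, 1)}}"
        have "h 0 = 0" unfolding h_def aff_def b_def by (simp add: algebra_simps)
        moreover have "h 1 = a' * a" unfolding h_def aff_def b_def a_def
          by (simp add: algebra_simps)
        then have "h 1 = 1" using a'(2) by (simp add: mult.commute)
        ultimately show "is_rel Sh X" using X by (auto simp: Sh(2) pair_image_single)
      qed
      then have "is_rel Sh {(x,x)}" for x using closure_min all[of x] unfolding C01_def by blast
      then have "pair_image h {(x,x)} = {(x,x)}" for x using Sh(2) by blast
      then have hx: "h x = x" for x unfolding pair_image_single by simp
      have "f x = a * x + b" for x
      proof -
        have c: "\<And>z. a * (a' * z) = z" using cancel_l[of a' a] a'(2) by (simp add: mult.commute)
        have "a' * f x + - (a' * b) = x" using hx[of x] unfolding h_def aff_def by simp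
        then have "a * (a' * f x + - (a' * b)) = a * x" by simp
        then have "f x - b = a * x" by (simp add: right_diff_distrib c)
        then show ?thesis by (simp add: algebra_simps)
      qed
      then have "f = (\<lambda>x. a * x + b)" by auto
      then show "f \<in> Gamma_affine K" unfolding Gamma_affine_def using aK by auto
    qed
  qed
  then show ?thesis using part1 unfolding C01_def by simp
qed

end
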